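(* Let $\vec r_1,\vec r_2$ be in the closed unit ball of $\mathbb{R}^3$, both orthogonal to $(0,0,1)$, with $r_i=|\vec r_i|$. Then $$d^2_{z,2}(\rho(\vec r_1),\rho(\vec r_2))=\sqrt{1-\min(r_1,r_2)^2}-\sqrt{1-\max(r_1,r_2)^2}.$$
   Context: Qubit setting: $\mathcal{H}=\mathbb{C}^2$, $\mathcal{H}^*$ is identified with $\mathbb{C}^2$ via the dual basis, and $A^T$ is the usual matrix transpose; operators on $\mathcal{H}\otimes\mathcal{H}^*$ are $4\times4$ matrices in the basis $e_1\otimes e_1^*,e_1\otimes e_2^*,e_2\otimes e_1^*,e_2\otimes e_2^*$. $\sigma_x=\begin{pmatrix}0&1\\1&0\end{pmatrix}$, $\sigma_y=\begin{pmatrix}0&-i\\i&0\end{pmatrix}$, $\sigma_z=\begin{pmatrix}1&0\\0&-1\end{pmatrix}$, $\vec\sigma=(\sigma_x,\sigma_y,\sigma_z)$, and $\rho(\vec r)=\tfrac12(I+\vec r\cdot\vec\sigma)$ for $|\vec r|\le1$. The set of couplings of states $\rho,\omega$ is $\mathcal{C}(\rho,\omega)=\{\Pi\in\mathcal{S}(\mathcal{H}\otimes\mathcal{H}^* ):\mathrm{tr}_{\mathcal{H}^*}[\Pi]=\omega,\ \mathrm{tr}_{\mathcal{H}}[\Pi]=\rho^T\}$. $C_{z,2}=(\sigma_z\otimes I^T-I\otimes\sigma_z^T)^2=\mathrm{diag}(0,4,4,0)$, $D^2_{z,2}(\rho,\omega)=\min_{\Pi\in\mathcal{C}(\rho,\omega)}\mathrm{tr}[\Pi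 C_{z,2}]$, and $d_{z,2}(\rho,\omega)=\big(D^2_{z,2}(\rho,\omega)-\tfrac12(D^2_{z,2}(\rho,\rho)+D^2_{z,2}(\omega,\omega))\big)^{1/2}$. *)

theory Defs
  imports "HOL-Analysis.Analysis"
begin

(* Qubit: H = C^2 indexed by the type 2 (index 0 ~ e_1, index 1 ~ e_2).
   Operators on H (x) H^dual are matrices indexed by pairs (i,j) ~ e_i (x) e_j^*. *)

type_synonym qmat = "complex^2^2"
type_synonym qqmat = "complex^(2 \<times> 2)^(2 \<times> 2)"

definition sigma_x :: qmat where
  "sigma_x = (\<chi> i j. if i \<noteq> j then 1 else 0)"

definition sigma_y :: qmat where
  "sigma_y = (\<chi> i j. if i = j then 0 else if i = 0 then - \<i> else \<i>)"

definition sigma_z :: qmat where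
  "sigma_z = (\<chi> i j. if i = j then (if i = 0 then 1 else -1) else 0)"

definition rho :: "real^3 \<Rightarrow> qmat" where
  "rho r = (1/2) *\<^sub>R (mat 1 + (r$1) *\<^sub>R sigma_x
                        + (r$2) *\<^sub>R sigma_y
                        + (r$3) *\<^sub>R sigma_z)"

definition kron :: "qmat \<Rightarrow> qmat \<Rightarrow> qqmat" where
  "kron A B = (\<chi> p q. A $ fst p $ fst q * B $ snd p $ snd q)"

definition psd :: "complex^'n^'n \<Rightarrow> bool" where
  "psd A \<longleftrightarrow> (\<forall>v::complex^'n.
     Im (\<Sum>i\<in>UNIV. \<Sum>j\<in>UNIV. cnj (v$i) * A$i$j * v$j) = 0 \<and>
     Re (\<Sum>i\<in>UNIV. \<Sum>j\<in>UNIV. cnj (v$i) * A$i$j * v$j) \<ge> 0)"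

definition states2 :: "qqmat set" where
  "states2 = {P. psd P \<and> trace P = 1}"

definition ptrace_dual :: "qqmat \<Rightarrow> qmat" where
  "ptrace_dual P = (\<chi> i i'. \<Sum>j\<in>UNIV. P $ (i,j) $ (i',j))"

definition ptrace_H :: "qqmat \<Rightarrow> qmat" where
  "ptrace_H P = (\<chi> j j'. \<Sum>i\<in>UNIV. P $ (i,j) $ (i,j'))"

definition couplings :: "qmat \<Rightarrow> qmat \<Rightarrow> qqmat set" where
  "couplings r w = {P \<in> states2. ptrace_dual P = w \<and> ptrace_H P = transpose r}"

definition C_z2 :: qqmat where
  "C_z2 = (let M = kron sigma_z (transpose (mat 1)) - kron (mat 1) (transpose sigma_z)
           in M ** M)"

definition D2_z2 :: "qmat \<Rightarrow> qmat \<Rightarrow> real" where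
  "D2_z2 r w = Inf ((\<lambda>P. Re (trace (P ** C_z2))) ` couplings r w)"

definition d_z2 :: "qmat \<Rightarrow> qmat \<Rightarrow> real" where
  "d_z2 r w = sqrt (D2_z2 r w - (1/2) * (D2_z2 r r + D2_z2 w w))"

end

theory Submission imports Defs begin
lemma Re_ofreal_mult: "Re (complex_of_real r * z) = r * Re z" by simp

lemma psd_pair:
  fixes P :: "complex^'n^'n"
  assumes "psd P" "i \<noteq> j"
  shows "0 \<le> x\<^sup>2 * Re (P$i$i) + (cmod b)\<^sup>2 * Re(P$j$j) + x * Re(b * P$i$j + cnj b * P$j$i)"
proof -
  define v :: "complex^'n" where "v = (\<chi> k. (if k = i then of_real x else 0) + (if k = j then b else 0))"
  have ge: "Re (\<Sum>a\<in>UNIV. \<Sum>c\<in>UNIV. cnj (v$a) * P$a$c * v$c) \<ge> 0"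
    using assms(1) unfolding psd_def by blast
  have inner: "(\<Sum>c\<in>UNIV. cnj (v$a) * P$a$c * v$c) = cnj (v$a) * (P$a$i * of_real x + P$a$j * b)" for a
  proof -
    have "(\<Sum>c\<in>UNIV. cnj (v$a) * P$a$c * v$c) = (\<Sum>c\<in>UNIV. (if c = i then cnj (v$a) * P$a$c * of_real x else 0) + (if c = j then cnj (v$a) * P$a$c * b else 0))"
      by (rule sum.cong) (auto simp: v_def distrib_left)
    also have "\<dots> = cnj (v$a) * (P$a$i * of_real x + P$a$j * b)"
      by (simp add: sum.distrib algebra_simps)
    finally show ?thesis .
  qed
  have "(\<Sum>a\<in>UNIV. \<Sum>c\<in>UNIV. cnj (v$a) * P$a$c * v$c) = (\<Sum>a\<in>UNIV. (if a = i then of_real x * (P$a$i * of_real x + P$a$j * b) else 0) + (if a = j then cnj b * (P$a$i * of_real x + P$a$j * b) else 0))"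
    unfolding inner by (rule sum.cong) (auto simp: v_def distrib_right)
  also have "\<dots> = of_real x * (P$i$i * of_real x + P$i$j * b) + cnj b * (P$j$i * of_real x + P$j$j * b)"
    by (simp add: sum.distrib)
  finally have eq: "(\<Sum>a\<in>UNIV. \<Sum>c\<in>UNIV. cnj (v$a) * P$a$c * v$c) = of_real x * (P$i$i * of_real x + P$i$j * b) + cnj b * (P$j$i * of_real x + P$j$j * b)" .
  have re: "Re (of_real x * (P$i$i * of_real x + P$i$j * b) + cnj b * (P$j$i * of_real x + P$j$j * b))
     = x\<^sup>2 * Re (P$i$i) + (cmod b)\<^sup>2 * Re(P$j$j) + x * Re(b * P$i$j + cnj b * P$j$i)"
  proof -
    have "cnj b * (P$j$j * b) = of_real ((cmod b)\<^sup>2) * P$j$j"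
    proof -
      have "cnj b * (P$j$j * b) = (b * cnj b) * P$j$j" by (simp add: algebra_simps)
      also have "b * cnj b = of_real ((cmod b)\<^sup>2)" using complex_norm_square[of b] by simp
      finally show ?thesis .
    qed
    then have e2: "of_real x * (P$i$i * of_real x + P$i$j * b) + cnj b * (P$j$i * of_real x + P$j$j * b)
      = of_real (x\<^sup>2) * P$i$i + of_real x * (b * P$i$j + cnj b * P$j$i) + of_real ((cmod b)\<^sup>2) * P$j$j"
      by (simp add: algebra_simps power2_eq_square)
    show ?thesis unfolding e2 by (simp only: plus_complex.sel Re_ofreal_mult)
  qed
  show ?thesis using ge re eq by simp
qed

lemma ne01[simp]: "(0::2) \<noteq> 1" "(1::2) \<noteq> 0" by simp_all
lemma UNIV2': "(UNIV::2 set) = {0,1}"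
  using exhaust_2 by (metis UNIV_2 insert_commute one_add_one zero_neq_one_class.zero_neq_one) 
lemma cases2: "(i::2) = 0 \<or> i = 1" using UNIV2' by blast
lemma sum2': "sum f (UNIV::2 set) = f 0 + f 1" unfolding UNIV2' by simp
lemma sum22: "sum f (UNIV::(2\<times>2) set) = f(0,0)+f(0,1)+f(1,0)+f(1,1)"
  unfolding UNIV_Times_UNIV[symmetric] sum.cartesian_product' sum2' by (simp add: algebra_simps)

lemma sz_entry: "sigma_z $ i $ k = (if i = k then (if i = 0 then 1 else -1) else 0)"
  by (simp add: sigma_z_def)
lemma M_entry: "(kron sigma_z (transpose (mat 1)) - kron (mat 1) (transpose sigma_z)) $ (i,j) $ (k,l)
   = (if i = k \<and> j = l then (if i = 0 then 1 else -1) - (if j = 0 then 1 else -1) else 0)"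
  by (simp add: kron_def mat_def transpose_def sigma_z_def)
lemma Cz2_entry: "C_z2 $ (i,j) $ (k,l) = (if i=k \<and> j=l \<and> i\<noteq>j then 4 else 0)"
proof -
  have "C_z2 $ (i,j) $ (k,l) = (\<Sum>r\<in>UNIV. (kron sigma_z (transpose (mat 1)) - kron (mat 1) (transpose sigma_z)) $ (i,j) $ r * (kron sigma_z (transpose (mat 1)) - kron (mat 1) (transpose sigma_z)) $ r $ (k,l))"
    by (simp add: C_z2_def Let_def matrix_matrix_mult_def)
  also have "\<dots> = (if i=k \<and> j=l \<and> i\<noteq>j then 4 else 0)"
    unfolding sum22 M_entry
    using cases2[of i] cases2[of j] cases2[of k] cases2[of l]
    by (elim disjE) simp_all
  finally show ?thesis .
qed

lemma rho_entries:
  "rho r $ 0 $ 0 = complex_of_real ((1 + r$3)/2)"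
  "rho r $ 1 $ 1 = complex_of_real ((1 - r$3)/2)"
  "rho r $ 0 $ 1 = Complex (r$1) (- r$2) / 2"
  "rho r $ 1 $ 0 = Complex (r$1) (r$2) / 2"
  by (auto simp: rho_def sigma_x_def sigma_y_def sigma_z_def mat_def complex_eq_iff)

lemma quad_bound:
  fixes A B R :: real
  assumes h: "\<And>x c. 0 \<le> x\<^sup>2 * B + c\<^sup>2 * R * A - x * c * R"
    and "A + B = 1" "A \<ge> 0" "B \<ge> 0" "R \<ge> 0"
  shows "R \<le> 4*A*B"
proof (cases "B = 0")
  case True
  have "0 \<le> 2\<^sup>2 * B + 1\<^sup>2 * R * A - 2 * 1 * R" by (rule h)
  then show ?thesis using True assms by simp
next
  case False
  then have Bp: "B > 0" using assms by simp
  have "0 \<le> R\<^sup>2 * B + (2*B)\<^sup>2 * R * A - R * (2*B) * R" by (rule h)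
  then have "0 \<le> B * R * (4*A*B - R)" by (simp add: algebra_simps power2_eq_square)
  show ?thesis
  proof (cases "R = 0")
    case True then show ?thesis using assms by simp
  next
    case False
    then have "B * R > 0" using Bp assms by simp
    with \<open>0 \<le> B * R * (4*A*B - R)\<close> have "0 \<le> 4*A*B - R"
      by (simp add: zero_le_mult_iff)
    then show ?thesis by simp
  qed
qed

lemma A_bound:
  fixes A R :: real
  assumes "R \<le> 4*A*(1-A)" "R \<le> 1" "0 \<le> R"
  shows "2 - 2 * sqrt(1-R) \<le> 4*A"
proof -
  have "(1 - 2*A)\<^sup>2 \<le> 1 - R" using assms by (simp add: algebra_simps power2_eq_square)
  then have "sqrt ((1 - 2*A)\<^sup>2) \<le> sqrt (1 - R)" by (rule real_sqrt_le_mono)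
  then have "\<bar>1 - 2*A\<bar> \<le> sqrt (1 - R)" by simp
  then show ?thesis by linarith
qed

lemma cost_eq: "Re (trace (P ** C_z2)) = 4 * Re (P$(0,1)$(0,1) + P$(1,0)$(1,0))"
  by (simp add: trace_def matrix_matrix_mult_def sum22 Cz2_entry)

lemma cmod_beta: "(cmod (- (complex_of_real c * Complex a b)))\<^sup>2 = c\<^sup>2 * (a\<^sup>2 + b\<^sup>2)"
  by (simp add: norm_mult complex_norm power_mult_distrib)

lemma re_comb: "Re (- (complex_of_real c * Complex x y) * (Complex x (-y) / 2) + cnj (- (complex_of_real c * Complex x y)) * (Complex x y / 2)) = - c * (x\<^sup>2 + y\<^sup>2)"
  by (simp add: power2_eq_square algebra_simps)
lemma re_comb2: "Re (- (complex_of_real c * Complex x (-y)) * (Complex x y / 2) + cnj (- (complex_of_real c * Complex x (-y))) * (Complex x (-y) / 2)) = - c * (x\<^sup>2 + y\<^sup>2)"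
  by (simp add: power2_eq_square algebra_simps)

lemma norm3: "norm (r::real^3) = sqrt((r$1)\<^sup>2 + (r$2)\<^sup>2 + (r$3)\<^sup>2)"
  unfolding norm_vec_def L2_set_def sum_3 by simp
lemma inner001: "r \<bullet> vector [0,0,1] = (r::real^3)$3"
  unfolding inner_vec_def sum_3 by simp

lemma lin_help: "(a::real) + b = - c * R \<Longrightarrow> x * a + x * b = - x * c * R"
proof -
  assume "a + b = - c * R"
  then have "x * (a + b) = x * (- c * R)" by simp
  then show ?thesis by (simp add: algebra_simps)
qed

lemma lower:
  assumes P: "P \<in> couplings (rho r1) (rho r2)" and z: "r1$3 = 0" "r2$3 = 0"
    and n: "norm r1 \<le> 1" "norm r2 \<le> 1"
  shows "2 - 2 * sqrt(1 - (max (norm r1) (norm r2))\<^sup>2) \<le> Re (trace (P ** C_z2))"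
proof -
  have psd: "psd P" and pd: "ptrace_dual P = rho r2" and pH: "ptrace_H P = transpose (rho r1)"
    using P by (auto simp: couplings_def states2_def)
  have d: "P$(i,0)$(i',0) + P$(i,1)$(i',1) = rho r2 $ i $ i'" for i i'
    using arg_cong[OF pd, of "\<lambda>M. M$i$i'"] by (simp add: ptrace_dual_def sum2')
  have h: "P$(0,j)$(0,j') + P$(1,j)$(1,j') = rho r1 $ j' $ j" for j j'
    using arg_cong[OF pH, of "\<lambda>M. M$j$j'"] by (simp add: ptrace_H_def sum2' transpose_def)
  define A where "A = Re (P$(0,1)$(0,1) + P$(1,0)$(1,0))"
  define B where "B = Re (P$(0,0)$(0,0) + P$(1,1)$(1,1))"
  have AB: "A + B = 1"
    using arg_cong[OF d[of 0 0], of Re] arg_cong[OF d[of 1 1], of Re] z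
    by (simp add: A_def B_def rho_entries)
  have nn: "0 \<le> Re (P$k$k)" for k
  proof -
    define k' :: "2\<times>2" where "k' = (if k = (0,0) then (0,1) else (0,0))"
    have "k' \<noteq> k" by (simp add: k'_def)
    from psd_pair[OF psd this, of 0 1] show ?thesis by simp
  qed
  have A0: "A \<ge> 0" "B \<ge> 0" unfolding A_def B_def using nn by (simp_all add: add_nonneg_nonneg)
  define R1 where "R1 = (r1$1)\<^sup>2 + (r1$2)\<^sup>2"
  define R2 where "R2 = (r2$1)\<^sup>2 + (r2$2)\<^sup>2"
  have q2: "0 \<le> x\<^sup>2 * B + c\<^sup>2 * R2 * A - x*c*R2" for x c
  proof -
    define b where "b = - (complex_of_real c * Complex (r2$1) (r2$2))"
    have p1: "0 \<le> x\<^sup>2 * Re (P$(0,0)$(0,0)) + (cmod b)\<^sup>2 * Re(P$(1,0)$(1,0)) + x * Re(b * P$(0,0)$(1,0) + cnj b * P$(1,0)$(0,0))"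
      by (rule psd_pair[OF psd]) simp
    have p2: "0 \<le> x\<^sup>2 * Re (P$(1,1)$(1,1)) + (cmod (cnj b))\<^sup>2 * Re(P$(0,1)$(0,1)) + x * Re(cnj b * P$(1,1)$(0,1) + cnj (cnj b) * P$(0,1)$(1,1))"
      by (rule psd_pair[OF psd]) simp
    have e: "Re(b * P$(0,0)$(1,0) + cnj b * P$(1,0)$(0,0)) + Re(cnj b * P$(1,1)$(0,1) + cnj (cnj b) * P$(0,1)$(1,1))
       = Re(b * (P$(0,0)$(1,0) + P$(0,1)$(1,1)) + cnj b * (P$(1,0)$(0,0) + P$(1,1)$(0,1)))"
      by (simp add: algebra_simps)
    also have "\<dots> = - c * R2"
      unfolding d rho_entries b_def R2_def by (rule re_comb)
    finally have e': "x * Re(b * P$(0,0)$(1,0) + cnj b * P$(1,0)$(0,0)) + x * Re(cnj b * P$(1,1)$(0,1) + cnj (cnj b) * P$(0,1)$(1,1)) = - x * c * R2"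
      by (rule lin_help)
    have cb: "(cmod (cnj b))\<^sup>2 = c\<^sup>2 * R2" "(cmod b)\<^sup>2 = c\<^sup>2 * R2"
      unfolding complex_mod_cnj b_def R2_def by (rule cmod_beta)+
    have "x\<^sup>2 * Re (P$(0,0)$(0,0)) + x\<^sup>2 * Re (P$(1,1)$(1,1)) = x\<^sup>2 * B"
      unfolding B_def by (simp add: algebra_simps)
    moreover have "c\<^sup>2 * R2 * Re(P$(1,0)$(1,0)) + c\<^sup>2 * R2 * Re(P$(0,1)$(0,1)) = c\<^sup>2 * R2 * A"
      unfolding A_def by (simp add: algebra_simps)
    ultimately show ?thesis using p1 p2 e' unfolding cb by linarith
  qed
  have q1: "0 \<le> x\<^sup>2 * B + c\<^sup>2 * R1 * A - x*c*R1" for x c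
  proof -
    define b where "b = - (complex_of_real c * Complex (r1$1) (- r1$2))"
    have p1: "0 \<le> x\<^sup>2 * Re (P$(0,0)$(0,0)) + (cmod b)\<^sup>2 * Re(P$(0,1)$(0,1)) + x * Re(b * P$(0,0)$(0,1) + cnj b * P$(0,1)$(0,0))"
      by (rule psd_pair[OF psd]) simp
    have p2: "0 \<le> x\<^sup>2 * Re (P$(1,1)$(1,1)) + (cmod (cnj b))\<^sup>2 * Re(P$(1,0)$(1,0)) + x * Re(cnj b * P$(1,1)$(1,0) + cnj (cnj b) * P$(1,0)$(1,1))"
      by (rule psd_pair[OF psd]) simp
    have e: "Re(b * P$(0,0)$(0,1) + cnj b * P$(0,1)$(0,0)) + Re(cnj b * P$(1,1)$(1,0) + cnj (cnj b) * P$(1,0)$(1,1))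
       = Re(b * (P$(0,0)$(0,1) + P$(1,0)$(1,1)) + cnj b * (P$(0,1)$(0,0) + P$(1,1)$(1,0)))"
      by (simp add: algebra_simps)
    also have "\<dots> = - c * R1"
      unfolding h rho_entries b_def R1_def by (rule re_comb2)
    finally have e': "x * Re(b * P$(0,0)$(0,1) + cnj b * P$(0,1)$(0,0)) + x * Re(cnj b * P$(1,1)$(1,0) + cnj (cnj b) * P$(1,0)$(1,1)) = - x * c * R1"
      by (rule lin_help)
    have cb: "(cmod (cnj b))\<^sup>2 = c\<^sup>2 * R1" "(cmod b)\<^sup>2 = c\<^sup>2 * R1"
      unfolding complex_mod_cnj b_def R1_def using cmod_beta[where b = "- r1$2"] by simp_all
    have "x\<^sup>2 * Re (P$(0,0)$(0,0)) + x\<^sup>2 * Re (P$(1,1)$(1,1)) = x\<^sup>2 * B"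
      unfolding B_def by (simp add: algebra_simps)
    moreover have "c\<^sup>2 * R1 * Re(P$(0,1)$(0,1)) + c\<^sup>2 * R1 * Re(P$(1,0)$(1,0)) = c\<^sup>2 * R1 * A"
      unfolding A_def by (simp add: algebra_simps)
    ultimately show ?thesis using p1 p2 e' unfolding cb by linarith
  qed
  have nr1: "(norm r1)\<^sup>2 = R1" "(norm r2)\<^sup>2 = R2"
    using z by (simp_all add: norm3 R1_def R2_def)
  have R1b: "R1 \<le> 4*A*B" by (rule quad_bound[OF q1 AB A0]) (simp add: R1_def)
  have R2b: "R2 \<le> 4*A*B" by (rule quad_bound[OF q2 AB A0]) (simp add: R2_def)
  define m where "m = max (norm r1) (norm r2)"
  have "m\<^sup>2 = R1 \<or> m\<^sup>2 = R2" unfolding m_def nr1[symmetric] by (simp add: max_def)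
  then have mb: "m\<^sup>2 \<le> 4*A*(1-A)" using R1b R2b AB by (auto simp: eq_diff_eq[symmetric])
  have "m \<le> 1" "0 \<le> m" using n by (auto simp: m_def le_max_iff_disj)
  then have "m\<^sup>2 \<le> 1" "0 \<le> m\<^sup>2" by (simp_all add: power_le_one)
  from A_bound[OF mb this] show ?thesis
    unfolding cost_eq m_def A_def[symmetric] by simp
qed

lemma gram_psd:
  fixes g :: "'n::finite \<Rightarrow> 'k::finite \<Rightarrow> complex"
  shows "psd ((\<chi> p q. \<Sum>k\<in>UNIV. g p k * cnj (g q k)) :: complex^'n^'n)"
  unfolding psd_def
proof
  fix v :: "complex^'n"
  define h where "h k = (\<Sum>j\<in>UNIV. cnj (g j k) * v$j)" for k
  have "(\<Sum>i\<in>UNIV. \<Sum>j\<in>UNIV. cnj (v$i) * (\<chi> p q. \<Sum>k\<in>UNIV. g p k * cnj (g q k))$i$j * v$j)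
      = (\<Sum>i\<in>UNIV. \<Sum>j\<in>UNIV. \<Sum>k\<in>UNIV. cnj (v$i) * g i k * cnj (g j k) * v$j)"
    by (simp add: sum_distrib_left sum_distrib_right mult.assoc)
  also have "\<dots> = (\<Sum>i\<in>UNIV. \<Sum>k\<in>UNIV. \<Sum>j\<in>UNIV. cnj (v$i) * g i k * cnj (g j k) * v$j)"
    by (rule sum.cong[OF refl], rule sum.swap)
  also have "\<dots> = (\<Sum>k\<in>UNIV. \<Sum>i\<in>UNIV. \<Sum>j\<in>UNIV. cnj (v$i) * g i k * cnj (g j k) * v$j)"
    by (rule sum.swap)
  also have "\<dots> = (\<Sum>k\<in>UNIV. cnj (h k) * h k)"
    unfolding h_def by (simp add: sum_product mult.assoc mult.left_commute)
  also have "\<dots> = (\<Sum>k\<in>UNIV. complex_of_real ((cmod (h k))\<^sup>2))"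
    by (rule sum.cong[OF refl]) (metis complex_norm_square mult.commute)
  finally have eq: "(\<Sum>i\<in>UNIV. \<Sum>j\<in>UNIV. cnj (v$i) * (\<chi> p q. \<Sum>k\<in>UNIV. g p k * cnj (g q k))$i$j * v$j) = complex_of_real (\<Sum>k\<in>UNIV. (cmod (h k))\<^sup>2)"
    by simp
  show "Im (\<Sum>i\<in>UNIV. \<Sum>j\<in>UNIV. cnj (v$i) * (\<chi> p q. \<Sum>k\<in>UNIV. g p k * cnj (g q k))$i$j * v$j) = 0 \<and>
        0 \<le> Re (\<Sum>i\<in>UNIV. \<Sum>j\<in>UNIV. cnj (v$i) * (\<chi> p q. \<Sum>k\<in>UNIV. g p k * cnj (g q k))$i$j * v$j)"
    unfolding eq by (simp add: sum_nonneg)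
qed

lemma construct:
  fixes a b s t :: real and nu mu :: complex
  assumes a0: "a \<ge> 0" and b0: "b \<ge> 0" and s2: "s\<^sup>2 = 1 - (cmod nu)\<^sup>2" and t2: "t\<^sup>2 = 1 - (cmod mu)\<^sup>2"
  defines "As \<equiv> complex_of_real (sqrt a)" and "Bs \<equiv> complex_of_real (sqrt b)"
    and "S \<equiv> complex_of_real s" and "T \<equiv> complex_of_real t"
  defines "g \<equiv> (\<lambda>p k::2\<times>2.
     if p = (0,0) then (if k = (0,0) then Bs else 0)
     else if p = (0,1) then (if k = (0,0) then As * cnj nu else if k = (1,0) then As * S else 0)
     else if p = (1,0) then (if k = (0,0) then As * cnj mu else if k = (0,1) then As * T else 0)
     else (if k = (0,0) then Bs * cnj nu * cnj mu else if k = (0,1) then Bs * cnj nu * T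
           else if k = (1,0) then Bs * S * cnj mu else Bs * S * T))"
  defines "P \<equiv> (\<chi> p q. \<Sum>k\<in>UNIV. g p k * cnj (g q k)) :: complex^(2\<times>2)^(2\<times>2)"
  shows "P$(0,0)$(0,0) = of_real b" "P$(0,1)$(0,1) = of_real a"
    "P$(1,0)$(1,0) = of_real a" "P$(1,1)$(1,1) = of_real b"
    "P$(0,0)$(0,1) + P$(1,0)$(1,1) = 2 * As * Bs * nu"
    "P$(0,1)$(0,0) + P$(1,1)$(1,0) = 2 * As * Bs * cnj nu"
    "P$(0,0)$(1,0) + P$(0,1)$(1,1) = 2 * As * Bs * mu"
    "P$(1,0)$(0,0) + P$(1,1)$(0,1) = 2 * As * Bs * cnj mu"
    "psd P"
proof -
  have cS: "cnj S = S" "cnj T = T" "cnj As = As" "cnj Bs = Bs" by (simp_all add: S_def T_def As_def Bs_def)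
  have AA: "As * As = of_real a" "Bs * Bs = of_real b"
    using a0 b0 by (simp_all add: As_def Bs_def flip: of_real_mult)
  have hN: "nu * cnj nu = 1 - S * S"
  proof -
    have "nu * cnj nu = of_real ((cmod nu)\<^sup>2)" using complex_norm_square[of nu] by simp
    also have "(cmod nu)\<^sup>2 = 1 - s * s" using s2 by (simp add: power2_eq_square)
    finally show ?thesis by (simp add: S_def)
  qed
  have hM: "mu * cnj mu = 1 - T * T"
  proof -
    have "mu * cnj mu = of_real ((cmod mu)\<^sup>2)" using complex_norm_square[of mu] by simp
    also have "(cmod mu)\<^sup>2 = 1 - t * t" using t2 by (simp add: power2_eq_square)
    finally show ?thesis by (simp add: T_def)
  qed
  show "P$(0,0)$(0,0) = of_real b" unfolding P_def g_def using AA cS by (simp add: sum22)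
  show "P$(0,1)$(0,1) = of_real a"
  proof -
    have "P$(0,1)$(0,1) = (As*As)*(nu*cnj nu + S*S)" unfolding P_def g_def by (simp add: sum22 cS algebra_simps)
    then show ?thesis using AA hN hM by simp
  qed
  show "P$(1,0)$(1,0) = of_real a"
  proof -
    have "P$(1,0)$(1,0) = (As*As)*(mu*cnj mu + T*T)" unfolding P_def g_def by (simp add: sum22 cS algebra_simps)
    then show ?thesis using AA hN hM by simp
  qed
  show "P$(1,1)$(1,1) = of_real b"
  proof -
    have "P$(1,1)$(1,1) = (Bs*Bs)*((nu*cnj nu + S*S)*(mu*cnj mu + T*T))" unfolding P_def g_def by (simp add: sum22 cS algebra_simps)
    then show ?thesis using AA hN hM by simp
  qed
  show "P$(0,0)$(0,1) + P$(1,0)$(1,1) = 2 * As * Bs * nu"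
  proof -
    have "P$(0,0)$(0,1) + P$(1,0)$(1,1) = As*Bs*nu*(1 + (mu*cnj mu + T*T))" unfolding P_def g_def by (simp add: sum22 cS algebra_simps)
    then show ?thesis using AA hN hM by simp
  qed
  show "P$(0,1)$(0,0) + P$(1,1)$(1,0) = 2 * As * Bs * cnj nu"
  proof -
    have "P$(0,1)$(0,0) + P$(1,1)$(1,0) = As*Bs*cnj nu*(1 + (mu*cnj mu + T*T))" unfolding P_def g_def by (simp add: sum22 cS algebra_simps)
    then show ?thesis using AA hN hM by simp
  qed
  show "P$(0,0)$(1,0) + P$(0,1)$(1,1) = 2 * As * Bs * mu"
  proof -
    have "P$(0,0)$(1,0) + P$(0,1)$(1,1) = As*Bs*mu*(1 + (nu*cnj nu + S*S))" unfolding P_def g_def by (simp add: sum22 cS algebra_simps)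
    then show ?thesis using AA hN hM by simp
  qed
  show "P$(1,0)$(0,0) + P$(1,1)$(0,1) = 2 * As * Bs * cnj mu"
  proof -
    have "P$(1,0)$(0,0) + P$(1,1)$(0,1) = As*Bs*cnj mu*(1 + (nu*cnj nu + S*S))" unfolding P_def g_def by (simp add: sum22 cS algebra_simps)
    then show ?thesis using AA hN hM by simp
  qed
  show "psd P" unfolding P_def by (rule gram_psd)
qed

lemma construct_ex:
  fixes a b s t :: real and nu mu :: complex
  assumes a0: "a \<ge> 0" and b0: "b \<ge> 0" and s2: "s\<^sup>2 = 1 - (cmod nu)\<^sup>2" and t2: "t\<^sup>2 = 1 - (cmod mu)\<^sup>2"
  shows "\<exists>P::complex^(2\<times>2)^(2\<times>2). psd P \<and> P$(0,0)$(0,0) = of_real b \<and> P$(0,1)$(0,1) = of_real a \<and>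
    P$(1,0)$(1,0) = of_real a \<and> P$(1,1)$(1,1) = of_real b \<and>
    P$(0,0)$(0,1) + P$(1,0)$(1,1) = 2 * (of_real (sqrt a) * of_real (sqrt b) * nu) \<and>
    P$(0,1)$(0,0) + P$(1,1)$(1,0) = 2 * (of_real (sqrt a) * of_real (sqrt b) * cnj nu) \<and>
    P$(0,0)$(1,0) + P$(0,1)$(1,1) = 2 * (of_real (sqrt a) * of_real (sqrt b) * mu) \<and>
    P$(1,0)$(0,0) + P$(1,1)$(0,1) = 2 * (of_real (sqrt a) * of_real (sqrt b) * cnj mu)"
  using construct[OF a0 b0 s2 t2] by (auto simp: mult.assoc)

lemma upper:
  assumes z: "r1$3 = 0" "r2$3 = 0" and n: "norm r1 \<le> 1" "norm r2 \<le> 1"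
  shows "\<exists>P\<in>couplings (rho r1) (rho r2). Re (trace (P ** C_z2)) = 2 - 2 * sqrt (1 - (max (norm r1) (norm r2))\<^sup>2)"
proof -
  define M where "M = max (norm r1) (norm r2)"
  have M0: "0 \<le> M" "M \<le> 1" "norm r1 \<le> M" "norm r2 \<le> M"
    using n by (auto simp: M_def le_max_iff_disj)
  define s0 where "s0 = sqrt (1 - M\<^sup>2)"
  have M2: "M\<^sup>2 \<le> 1" using M0 by (simp add: power_le_one)
  have s0: "0 \<le> s0" "s0 \<le> 1" "s0\<^sup>2 = 1 - M\<^sup>2"
    using M2 by (simp_all add: s0_def)
  define a where "a = (1 - s0)/4"
  define b where "b = (1 + s0)/4"
  have a0: "a \<ge> 0" and b0: "b \<ge> 0" using s0 by (simp_all add: a_def b_def)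
  define v where "v = Complex (r1$1) (r1$2)"
  define w where "w = Complex (r2$1) (- r2$2)"
  have cv: "cmod v = norm r1" "cmod w = norm r2"
    using z by (simp_all add: v_def w_def complex_norm norm3)
  define nu where "nu = v / of_real M"
  define mu where "mu = w / of_real M"
  have cnu: "cmod nu \<le> 1" "cmod mu \<le> 1"
  proof -
    show "cmod nu \<le> 1"
    proof (cases "M = 0")
      case True then show ?thesis by (simp add: nu_def)
    next
      case False then show ?thesis using M0 cv by (simp add: nu_def norm_divide)
    qed
    show "cmod mu \<le> 1"
    proof (cases "M = 0")
      case True then show ?thesis by (simp add: mu_def)
    next
      case False then show ?thesis using M0 cv by (simp add: mu_def norm_divide)
    qed
  qed
  define s where "s = sqrt (1 - (cmod nu)\<^sup>2)"
  define t where "t = sqrt (1 - (cmod mu)\<^sup>2)"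
  have s2: "s\<^sup>2 = 1 - (cmod nu)\<^sup>2" and t2: "t\<^sup>2 = 1 - (cmod mu)\<^sup>2"
    using cnu by (simp_all add: s_def t_def power_le_one)
  have sab: "sqrt a * sqrt b = M / 4"
  proof -
    have "a * b = (1 - s0\<^sup>2) / 16" by (simp add: a_def b_def power2_eq_square algebra_simps)
    also have "\<dots> = (M/4)\<^sup>2" using s0 by (simp add: power2_eq_square)
    finally have "sqrt a * sqrt b = sqrt ((M/4)\<^sup>2)" by (simp add: real_sqrt_mult[symmetric])
    then show ?thesis using M0 by simp
  qed
  have key: "complex_of_real (sqrt a) * complex_of_real (sqrt b) * nu = v / 4"
            "complex_of_real (sqrt a) * complex_of_real (sqrt b) * mu = w / 4"
  proof -
    have e: "complex_of_real (sqrt a) * complex_of_real (sqrt b) = complex_of_real (M / 4)"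
      by (simp only: sab flip: of_real_mult)
    show "complex_of_real (sqrt a) * complex_of_real (sqrt b) * nu = v / 4"
    proof (cases "M = 0")
      case True then have "v = 0" using cv M0 by simp
      then show ?thesis by (simp add: nu_def)
    next
      case False then show ?thesis unfolding e nu_def by (simp add: field_simps)
    qed
    show "complex_of_real (sqrt a) * complex_of_real (sqrt b) * mu = w / 4"
    proof (cases "M = 0")
      case True then have "w = 0" using cv M0 by simp
      then show ?thesis by (simp add: mu_def)
    next
      case False then show ?thesis unfolding e mu_def by (simp add: field_simps)
    qed
  qed
  have keyc: "complex_of_real (sqrt a) * complex_of_real (sqrt b) * cnj nu = cnj v / 4"
            "complex_of_real (sqrt a) * complex_of_real (sqrt b) * cnj mu = cnj w / 4"
    using arg_cong[OF key(1), of cnj] arg_cong[OF key(2), of cnj] by simp_all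
  obtain P :: "complex^(2\<times>2)^(2\<times>2)" where P: "psd P" "P$(0,0)$(0,0) = of_real b" "P$(0,1)$(0,1) = of_real a"
    "P$(1,0)$(1,0) = of_real a" "P$(1,1)$(1,1) = of_real b"
    "P$(0,0)$(0,1) + P$(1,0)$(1,1) = 2 * (v / 4)"
    "P$(0,1)$(0,0) + P$(1,1)$(1,0) = 2 * (cnj v / 4)"
    "P$(0,0)$(1,0) + P$(0,1)$(1,1) = 2 * (w / 4)"
    "P$(1,0)$(0,0) + P$(1,1)$(0,1) = 2 * (cnj w / 4)"
    using construct_ex[OF a0 b0 s2 t2] unfolding key keyc by blast
  have ab: "complex_of_real b + complex_of_real a = 1/2"
  proof -
    have e: "b + a = 1/2" by (simp add: a_def b_def field_simps)
    have "complex_of_real b + complex_of_real a = complex_of_real (1/2)" by (simp only: e flip: of_real_add)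
    then show ?thesis by simp
  qed
  have tr: "trace P = 1"
  proof -
    have "trace P = (of_real b + of_real a) + (of_real a + of_real b)"
      by (simp add: trace_def sum22 P)
    then show ?thesis by (simp only: add.commute[of "complex_of_real a"] ab) simp
  qed
  have pd: "ptrace_dual P = rho r2"
  proof -
    have "ptrace_dual P $ i $ i' = rho r2 $ i $ i'" for i i'
      using cases2[of i] cases2[of i'] z
      apply (elim disjE)
      apply (simp_all add: ptrace_dual_def sum2' rho_entries P)
      apply (simp_all add: w_def complex_eq_iff a_def b_def field_simps)
      done
    then show ?thesis by (simp add: vec_eq_iff)
  qed
  have pH: "ptrace_H P = transpose (rho r1)"
  proof -
    have "ptrace_H P $ j $ j' = transpose (rho r1) $ j $ j'" for j j'
      using cases2[of j] cases2[of j'] z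
      apply (elim disjE)
      apply (simp_all add: ptrace_H_def transpose_def sum2' rho_entries P)
      apply (simp_all add: v_def complex_eq_iff a_def b_def field_simps)
      done
    then show ?thesis by (simp add: vec_eq_iff)
  qed
  have cost: "Re (trace (P ** C_z2)) = 2 - 2 * sqrt (1 - M\<^sup>2)"
    unfolding cost_eq P(3) P(4) by (simp add: a_def s0_def)
  show ?thesis
    using P(1) tr pd pH cost unfolding M_def couplings_def states2_def by blast
qed

lemma D2_val:
  assumes z: "r1$3 = 0" "r2$3 = 0" and n: "norm r1 \<le> 1" "norm r2 \<le> 1"
  shows "D2_z2 (rho r1) (rho r2) = 2 - 2 * sqrt (1 - (max (norm r1) (norm r2))\<^sup>2)"
proof -
  obtain P where P: "P \<in> couplings (rho r1) (rho r2)"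
    "Re (trace (P ** C_z2)) = 2 - 2 * sqrt (1 - (max (norm r1) (norm r2))\<^sup>2)"
    using upper[OF z n] by blast
  show ?thesis unfolding D2_z2_def
  proof (rule cInf_eq_minimum)
    show "2 - 2 * sqrt (1 - (max (norm r1) (norm r2))\<^sup>2) \<in> (\<lambda>P. Re (trace (P ** C_z2))) ` couplings (rho r1) (rho r2)"
      using P by (metis image_eqI)
    show "2 - 2 * sqrt (1 - (max (norm r1) (norm r2))\<^sup>2) \<le> x"
      if "x \<in> (\<lambda>P. Re (trace (P ** C_z2))) ` couplings (rho r1) (rho r2)" for x
      using that lower[OF _ z n] by blast
  qed
qed

theorem corollary3p7:
  fixes r1 r2 :: "real^3"
  assumes "norm r1 \<le> 1" and "norm r2 \<le> 1"
    and "r1 \<bullet> vector [0, 0, 1] = 0" and "r2 \<bullet> vector [0, 0, 1] = 0"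
  shows "(d_z2 (rho r1) (rho r2))\<^sup>2
       = sqrt (1 - (min (norm r1) (norm r2))\<^sup>2) - sqrt (1 - (max (norm r1) (norm r2))\<^sup>2)"
proof -
  have z: "r1$3 = 0" "r2$3 = 0" using assms(3,4) by (simp_all add: inner001)
  have D12: "D2_z2 (rho r1) (rho r2) = 2 - 2 * sqrt (1 - (max (norm r1) (norm r2))\<^sup>2)"
    by (rule D2_val[OF z assms(1,2)])
  have D11: "D2_z2 (rho r1) (rho r1) = 2 - 2 * sqrt (1 - (norm r1)\<^sup>2)"
    using D2_val[OF z(1) z(1) assms(1) assms(1)] by simp
  have D22: "D2_z2 (rho r2) (rho r2) = 2 - 2 * sqrt (1 - (norm r2)\<^sup>2)"
    using D2_val[OF z(2) z(2) assms(2) assms(2)] by simp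
  have e: "D2_z2 (rho r1) (rho r2) - (1/2) * (D2_z2 (rho r1) (rho r1) + D2_z2 (rho r2) (rho r2))
     = sqrt (1 - (min (norm r1) (norm r2))\<^sup>2) - sqrt (1 - (max (norm r1) (norm r2))\<^sup>2)"
    unfolding D12 D11 D22 by (cases "norm r1 \<le> norm r2") (simp_all add: max_def min_def algebra_simps)
  have nn: "0 \<le> sqrt (1 - (min (norm r1) (norm r2))\<^sup>2) - sqrt (1 - (max (norm r1) (norm r2))\<^sup>2)"
  proof -
    have "(min (norm r1) (norm r2))\<^sup>2 \<le> (max (norm r1) (norm r2))\<^sup>2"
      by (rule power_mono) (auto simp: min_def)
    then show ?thesis by simp
  qed
  show ?thesis unfolding d_z2_def e using nn by simp
qed
end
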